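(* Let $R_e\approx1.4877$ be the unique positive root of $\frac{10}{7(R+1)}-\frac{R^2\sqrt{R}}{R^2+R+1}=0$. Then for all $0<x,y,z<R_e$, $$2d_0(y,z)+\tfrac{7}{10}\sqrt{y}\,d_1(y,z)-\tfrac{51}{100}\sqrt{yz}\,d_2(y,z)+\tfrac{10}{7}\sqrt{x}\,d_1(x,y)+\sqrt{xy}\,d_2(x,y)>\tfrac{1}{50}.$$
   Context: For $x,y\ge0$: $d_0(x,y)=\frac{1+2x}{1+x}+\frac{xy}{1+y+xy}$, $d_1(x,y)=-\frac{x}{1+x}-\frac{xy}{1+y+xy}-\frac{xy^2}{1+y+xy}\frac{1+x}{1+y}$, $d_2(x,y)=\frac{xy^2}{1+y+xy}\frac{1+x}{1+y}$. *)

theory Defs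
  imports Complex_Main
begin

definition d0 :: "real \<Rightarrow> real \<Rightarrow> real" where
  "d0 x y = (1 + 2*x) / (1 + x) + x*y / (1 + y + x*y)"

definition d1 :: "real \<Rightarrow> real \<Rightarrow> real" where
  "d1 x y = - (x / (1 + x)) - x*y / (1 + y + x*y)
            - (x*y^2 / (1 + y + x*y)) * ((1 + x) / (1 + y))"

definition d2 :: "real \<Rightarrow> real \<Rightarrow> real" where
  "d2 x y = (x*y^2 / (1 + y + x*y)) * ((1 + x) / (1 + y))"

definition Re_root :: real where
  "Re_root = (THE R. R > 0 \<and> 10 / (7 * (R + 1)) - R^2 * sqrt R / (R^2 + R + 1) = 0)"

end

theory Submission
  imports Defs
begin


definition fR :: "real \<Rightarrow> real" where
  "fR R = 10 / (7 * (R + 1)) - R^2 * sqrt R / (R^2 + R + 1)"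

lemma fR_strict_mono:
  assumes "0 < u" "u < v" shows "fR v < fR u"
proof -
  have a: "10 / (7 * (v + 1)) < 10 / (7 * (u + 1))"
    using assms by (simp add: divide_simps)
  have s: "sqrt u \<le> sqrt v" using assms by simp
  have q: "u^2 * (v^2+v+1) \<le> v^2 * (u^2+u+1)"
  proof -
    have "u^2*v \<le> v^2*u" using assms by (simp add: power2_eq_square mult_left_mono)
    moreover have "u^2 \<le> v^2" using assms by (simp add: power_mono)
    ultimately show ?thesis by (simp add: algebra_simps)
  qed
  have "u^2 * sqrt u * (v^2+v+1) \<le> v^2 * sqrt v * (u^2+u+1)"
  proof -
    have "u^2 * sqrt u * (v^2+v+1) = sqrt u * (u^2 * (v^2+v+1))" by simp
    also have "\<dots> \<le> sqrt v * (u^2 * (v^2+v+1))"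
      using s assms by (intro mult_right_mono mult_nonneg_nonneg add_nonneg_nonneg) auto
    also have "\<dots> \<le> sqrt v * (v^2 * (u^2+u+1))"
      using q assms by (intro mult_left_mono) auto
    finally show ?thesis by (simp add: algebra_simps)
  qed
  hence b: "u^2 * sqrt u / (u^2+u+1) \<le> v^2 * sqrt v / (v^2+v+1)"
    using assms by (simp add: divide_simps add_pos_pos) 
  show ?thesis using a b unfolding fR_def by linarith
qed

lemma sqrt_s1: "sqrt ((6099/5000::real)^2) = 6099/5000" by simp

lemma fR_R1: "fR ((6099/5000)^2) < 0"
  unfolding fR_def sqrt_s1 by (simp add: divide_simps)

lemma fR_1: "fR 1 > 0" unfolding fR_def by simp

lemma fR_cont: "continuous_on {1..(6099/5000)^2} fR"
  unfolding fR_def apply (intro continuous_intros) apply auto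
  by (smt (verit) zero_le_power2)

lemma Re_root_prop: "0 < Re_root \<and> fR Re_root = 0"
proof -
  obtain r where r: "1 \<le> r" "r \<le> (6099/5000)^2" "fR r = 0"
    using IVT2'[where f=fR and a=1 and b="(6099/5000)^2" and y=0] fR_R1 fR_1 fR_cont by force
  have "\<exists>!R. R > 0 \<and> fR R = 0"
  proof (rule ex1I[of _ r])
    show "r > 0 \<and> fR r = 0" using r by simp
    fix R assume R: "R > 0 \<and> fR R = 0"
    show "R = r"
    proof (rule ccontr)
      assume "R \<noteq> r"
      hence "R < r \<or> r < R" by linarith
      thus False using fR_strict_mono[of R r] fR_strict_mono[of r R] R r by auto
    qed
  qed
  hence "\<exists>!R. R > 0 \<and> 10 / (7 * (R + 1)) - R^2 * sqrt R / (R^2 + R + 1) = 0"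
    unfolding fR_def .
  from theI'[OF this] show ?thesis unfolding Re_root_def fR_def .
qed

lemma Re_root_bound: "Re_root < (6099/5000)^2"
proof (rule ccontr)
  assume "\<not> ?thesis"
  hence h: "(6099/5000)^2 \<le> Re_root" by simp
  have "fR Re_root \<le> fR ((6099/5000)^2)"
  proof (cases "Re_root = (6099/5000)^2")
    case False thus ?thesis using h fR_strict_mono[of "(6099/5000)^2" Re_root] by simp
  qed simp
  thus False using fR_R1 Re_root_prop by simp
qed



definition hh :: "real \<Rightarrow> real \<Rightarrow> real" where
  "hh y z = y*z/(1+z+y*z)"

lemma hh_nonneg: "0 \<le> y \<Longrightarrow> 0 \<le> z \<Longrightarrow> 0 \<le> hh y z"
  unfolding hh_def by simp

lemma mono_hh:
  fixes y0 y1 z0 z1 :: real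
  assumes "0 \<le> y0" "y0 \<le> y1" "0 \<le> z0" "z0 \<le> z1"
  shows "hh y0 z0 \<le> hh y1 z1"
proof -
  have p: "y0*z0 \<le> y1*z1" using assms by (intro mult_mono) auto
  have q: "y0*z0*z1 \<le> y1*z1*z0"
    using assms by (simp add: mult.commute mult.left_commute mult_right_mono)
  have "y0*z0*(1+z1+y1*z1) \<le> y1*z1*(1+z0+y0*z0)"
    using p q by (simp add: algebra_simps)
  moreover have "0 < 1+z1+y1*z1" "0 < 1+z0+y0*z0" using assms
    by (simp_all add: add_pos_nonneg)
  ultimately show ?thesis unfolding hh_def by (simp add: divide_simps)
qed

lemma d2_alt: "0 \<le> x \<Longrightarrow> 0 \<le> y \<Longrightarrow> d2 x y = (x*(1+x)) * (y/(1+(1+x)*y)) * (y/(1+y))"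
proof -
  assume h: "0 \<le> x" "0 \<le> y"
  have a: "1+y+x*y \<noteq> 0" "1+(1+x)*y \<noteq> 0" "1+y \<noteq> 0" using h by (auto simp: algebra_simps add_nonneg_eq_0_iff)
  show ?thesis unfolding d2_def using a by (simp add: field_simps power2_eq_square) 
qed
lemma monoA: "0 \<le> y0 \<Longrightarrow> y0 \<le> y \<Longrightarrow> (1+2*y0)/(1+y0) \<le> (1+2*y)/(1+(y::real))"
  by (simp add: divide_simps algebra_simps)

lemma monoB: "0 \<le> y \<Longrightarrow> y \<le> y1 \<Longrightarrow> y/(1+y) \<le> y1/(1+(y1::real))"
  by (simp add: divide_simps algebra_simps)

lemma d2_nonneg: "0 \<le> x \<Longrightarrow> 0 \<le> y \<Longrightarrow> 0 \<le> d2 x y"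
  by (simp add: d2_alt)

lemma mono_d2:
  fixes x0 x1 y0 y1 :: real
  assumes "0 \<le> x0" "x0 \<le> x1" "0 \<le> y0" "y0 \<le> y1"
  shows "d2 x0 y0 \<le> d2 x1 y1"
proof -
  have e: "d2 x y = x * (((1+x)*y)/(1+(1+x)*y)) * (y/(1+y))" if "0 \<le> x" "0 \<le> y" for x y
    using d2_alt[OF that] by simp
  have u: "(1+x0)*y0 \<le> (1+x1)*y1" using assms by (intro mult_mono) auto
  have b: "((1+x0)*y0)/(1+(1+x0)*y0) \<le> ((1+x1)*y1)/(1+(1+x1)*y1)"
    using assms u by (intro monoB) auto
  have c: "y0/(1+y0) \<le> y1/(1+y1)" using assms by (intro monoB) auto
  have "x0 * (((1+x0)*y0)/(1+(1+x0)*y0)) \<le> x1 * (((1+x1)*y1)/(1+(1+x1)*y1))"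
    using b assms by (rule_tac mult_mono) (auto simp: add_pos_nonneg)
  hence "x0 * (((1+x0)*y0)/(1+(1+x0)*y0)) * (y0/(1+y0)) \<le> x1 * (((1+x1)*y1)/(1+(1+x1)*y1)) * (y1/(1+y1))"
    using c assms by (rule_tac mult_mono) (auto simp: add_pos_nonneg)
  thus ?thesis using assms by (simp add: e)
qed



definition LB :: "real \<Rightarrow> real \<Rightarrow> real \<Rightarrow> real \<Rightarrow> real" where
  "LB b0 b1 c0 c1 = 2*((1+2*b0^2)/(1+b0^2)) + (2 - 7/10*b1) * hh (b0^2) (c0^2)
     - 7/10*b1*(b1^2/(1+b1^2)) - (7/10*b1 + 51/100*b1*c1) * d2 (b1^2) (c1^2)
     + (6099/5000) * (-10/7*((6099/5000)^2/(1+(6099/5000)^2)) - 10/7*hh ((6099/5000)^2) (b1^2)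
        + (b0 - 10/7) * d2 ((6099/5000)^2) (b1^2))"

lemma d1_eq: "d1 x y = -(x/(1+x)) - hh x y - d2 x y"
  unfolding d1_def d2_def hh_def by simp

lemma d0_eq: "d0 x y = (1+2*x)/(1+x) + hh x y"
  unfolding d0_def hh_def by simp

lemma box:
  fixes x y z b0 b1 c0 c1 :: real
  assumes "0 \<le> b0" "b0 \<le> sqrt y" "sqrt y \<le> b1" "b1 \<le> 6099/5000"
    "0 \<le> c0" "c0 \<le> sqrt z" "sqrt z \<le> c1"
    "0 < x" "x \<le> (6099/5000)^2" "0 < y" "0 < z"
  shows "LB b0 b1 c0 c1 \<le> 2 * d0 y z + 7/10 * sqrt y * d1 y z - 51/100 * sqrt (y*z) * d2 y z
         + 10/7 * sqrt x * d1 x y + sqrt (x*y) * d2 x y"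
proof -
  define s where "s = (6099/5000::real)"
  define R where "R = s^2"
  have sy: "b0^2 \<le> y" "y \<le> b1^2"
    using assms power_mono[of b0 "sqrt y" 2] power_mono[of "sqrt y" b1 2] by auto
  have sz: "c0^2 \<le> z" "z \<le> c1^2"
    using assms power_mono[of c0 "sqrt z" 2] power_mono[of "sqrt z" c1 2] by auto
  have sx: "sqrt x \<le> s" using assms real_sqrt_le_mono[of x "s^2"] unfolding s_def by simp
  have xR: "x \<le> R" using assms unfolding R_def s_def by simp
  have b1s: "b1 \<le> s" using assms unfolding s_def by simp
  let ?G = "-10/7*(x/(1+x)) - 10/7*hh x y + (sqrt y - 10/7) * d2 x y"
  have eq: "2 * d0 y z + 7/10 * sqrt y * d1 y z - 51/100 * sqrt (y*z) * d2 y z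
         + 10/7 * sqrt x * d1 x y + sqrt (x*y) * d2 x y =
     2*((1+2*y)/(1+y)) + (2 - 7/10*sqrt y) * hh y z - 7/10*sqrt y*(y/(1+y))
     - (7/10*sqrt y + 51/100*sqrt y*sqrt z) * d2 y z + sqrt x * ?G"
    unfolding d0_eq d1_eq by (simp add: real_sqrt_mult algebra_simps add_divide_distrib)
  have t1: "2*((1+2*b0^2)/(1+b0^2)) \<le> 2*((1+2*y)/(1+y))"
    using monoA[of "b0^2" y] sy by (simp only: zero_le_power2 mult_le_cancel_left_pos zero_less_numeral)
  have t2: "(2 - 7/10*b1) * hh (b0^2) (c0^2) \<le> (2 - 7/10*sqrt y) * hh y z"
  proof (rule mult_mono)
    show "hh (b0^2) (c0^2) \<le> hh y z" using mono_hh sy sz by simp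
    show "0 \<le> 2 - 7/10*sqrt y" using assms by simp
    show "0 \<le> hh (b0^2) (c0^2)" by (simp add: hh_nonneg)
  qed (use assms in simp)
  have t3: "7/10*sqrt y*(y/(1+y)) \<le> 7/10*b1*(b1^2/(1+b1^2))"
    using assms monoB[of y "b1^2"] sy by (intro mult_mono) auto
  have t4: "(7/10*sqrt y + 51/100*sqrt y*sqrt z) * d2 y z \<le> (7/10*b1 + 51/100*b1*c1) * d2 (b1^2) (c1^2)"
  proof (rule mult_mono)
    have "sqrt y * sqrt z \<le> b1 * c1" using assms by (intro mult_mono) auto
    thus "7/10*sqrt y + 51/100*sqrt y*sqrt z \<le> 7/10*b1 + 51/100*b1*c1" using assms by simp
    show "d2 y z \<le> d2 (b1^2) (c1^2)" using mono_d2 sy sz assms by simp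
    show "0 \<le> 7/10*b1 + 51/100*b1*c1" using assms by simp
    show "0 \<le> d2 y z" using assms by (simp add: d2_nonneg)
  qed
  define Gl where "Gl = -10/7*(R/(1+R)) - 10/7*hh R (b1^2) + (b0 - 10/7) * d2 R (b1^2)"
  have G1: "Gl \<le> ?G"
  proof -
    have "x/(1+x) \<le> R/(1+R)" using monoB[of x R] xR assms by simp
    moreover have "hh x y \<le> hh R (b1^2)" using mono_hh[of x R y "b1^2"] xR sy assms by simp
    moreover have "(b0 - 10/7) * d2 R (b1^2) \<le> (sqrt y - 10/7) * d2 x y"
    proof -
      have dd: "d2 x y \<le> d2 R (b1^2)" using mono_d2[of x R y "b1^2"] xR sy assms by simp
      have "0 \<le> d2 x y" using assms by (simp add: d2_nonneg)
      have "(b0 - 10/7) * d2 R (b1^2) \<le> (sqrt y - 10/7) * d2 R (b1^2)"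
        using assms d2_nonneg[of R "b1^2"] unfolding R_def by (intro mult_right_mono) auto
      also have "\<dots> \<le> (sqrt y - 10/7) * d2 x y"
        using dd assms by (intro mult_left_mono_neg) auto
      finally show ?thesis .
    qed
    ultimately show ?thesis unfolding Gl_def by linarith
  qed
  have G0: "Gl \<le> 0"
  proof -
    have "0 \<le> hh R (b1^2)" unfolding R_def by (simp add: hh_nonneg)
    moreover have "0 \<le> d2 R (b1^2)" unfolding R_def by (simp add: d2_nonneg)
    moreover have "b0 \<le> 10/7" using assms b1s unfolding s_def by linarith
    moreover have "0 \<le> R/(1+R)" unfolding R_def by simp
    ultimately have "(b0 - 10/7) * d2 R (b1^2) \<le> 0" by (simp add: mult_nonpos_nonneg)
    thus ?thesis unfolding Gl_def using \<open>0 \<le> hh R (b1^2)\<close> \<open>0 \<le> R/(1+R)\<close> by linarith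
  qed
  have t5: "s * Gl \<le> sqrt x * ?G"
  proof -
    have "s * Gl \<le> sqrt x * Gl" using sx G0 by (intro mult_right_mono_neg) auto
    also have "\<dots> \<le> sqrt x * ?G" using G1 assms by (intro mult_left_mono) auto
    finally show ?thesis .
  qed
  have "LB b0 b1 c0 c1 = 2*((1+2*b0^2)/(1+b0^2)) + (2 - 7/10*b1) * hh (b0^2) (c0^2)
     - 7/10*b1*(b1^2/(1+b1^2)) - (7/10*b1 + 51/100*b1*c1) * d2 (b1^2) (c1^2) + s * Gl"
    unfolding LB_def Gl_def R_def s_def by simp
  thus ?thesis unfolding eq using t1 t2 t3 t4 t5 by linarith
qed


definition Q :: "real \<Rightarrow> real \<Rightarrow> real \<Rightarrow> real \<Rightarrow> bool" where
  "Q b0 b1 c0 c1 = (\<forall>x y z. 0 < x \<and> x \<le> (6099/5000)^2 \<and> 0 < y \<and> 0 < z \<and>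
     b0 \<le> sqrt y \<and> sqrt y \<le> b1 \<and> c0 \<le> sqrt z \<and> sqrt z \<le> c1 \<longrightarrow>
     2 * d0 y z + 7/10 * sqrt y * d1 y z - 51/100 * sqrt (y*z) * d2 y z
         + 10/7 * sqrt x * d1 x y + sqrt (x*y) * d2 x y > 1/50)"

lemma splitB: "Q b0 m c0 c1 \<Longrightarrow> Q m b1 c0 c1 \<Longrightarrow> Q b0 b1 c0 c1"
  unfolding Q_def by (meson linear)

lemma splitC: "Q b0 b1 c0 m \<Longrightarrow> Q b0 b1 m c1 \<Longrightarrow> Q b0 b1 c0 c1"
  unfolding Q_def by (meson linear)

lemma leaf: "0 \<le> b0 \<Longrightarrow> b1 \<le> 6099/5000 \<Longrightarrow> 0 \<le> c0 \<Longrightarrow> 1/50 < LB b0 b1 c0 c1 \<Longrightarrow> Q b0 b1 c0 c1"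
  unfolding Q_def using box by (meson less_le_trans)

lemma leaf0: "1/50 < LB (0) (6099/20000) (0) (6099/10000)"
  unfolding LB_def hh_def d2_def by (simp add: power_divide)

lemma leaf1: "1/50 < LB (6099/20000) (6099/10000) (0) (6099/10000)"
  unfolding LB_def hh_def d2_def by (simp add: power_divide)

lemma leaf2: "1/50 < LB (0) (6099/20000) (6099/10000) (6099/5000)"
  unfolding LB_def hh_def d2_def by (simp add: power_divide)

lemma leaf3: "1/50 < LB (6099/20000) (6099/10000) (6099/10000) (6099/5000)"
  unfolding LB_def hh_def d2_def by (simp add: power_divide)

lemma leaf4: "1/50 < LB (6099/10000) (18297/20000) (0) (6099/20000)"
  unfolding LB_def hh_def d2_def by (simp add: power_divide)

lemma leaf5: "1/50 < LB (6099/10000) (6099/8000) (6099/20000) (6099/10000)"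
  unfolding LB_def hh_def d2_def by (simp add: power_divide)

lemma leaf6: "1/50 < LB (6099/8000) (18297/20000) (6099/20000) (6099/10000)"
  unfolding LB_def hh_def d2_def by (simp add: power_divide)

lemma leaf7: "1/50 < LB (18297/20000) (6099/5000) (0) (6099/20000)"
  unfolding LB_def hh_def d2_def by (simp add: power_divide)

lemma leaf8: "1/50 < LB (18297/20000) (42693/40000) (6099/20000) (6099/10000)"
  unfolding LB_def hh_def d2_def by (simp add: power_divide)

lemma leaf9: "1/50 < LB (42693/40000) (6099/5000) (6099/20000) (6099/10000)"
  unfolding LB_def hh_def d2_def by (simp add: power_divide)

lemma leaf10: "1/50 < LB (6099/10000) (6099/8000) (6099/10000) (18297/20000)"
  unfolding LB_def hh_def d2_def by (simp add: power_divide)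

lemma leaf11: "1/50 < LB (6099/8000) (18297/20000) (6099/10000) (18297/20000)"
  unfolding LB_def hh_def d2_def by (simp add: power_divide)

lemma leaf12: "1/50 < LB (6099/10000) (6099/8000) (18297/20000) (6099/5000)"
  unfolding LB_def hh_def d2_def by (simp add: power_divide)

lemma leaf13: "1/50 < LB (6099/8000) (18297/20000) (18297/20000) (6099/5000)"
  unfolding LB_def hh_def d2_def by (simp add: power_divide)

lemma leaf14: "1/50 < LB (18297/20000) (42693/40000) (6099/10000) (18297/20000)"
  unfolding LB_def hh_def d2_def by (simp add: power_divide)

lemma leaf15: "1/50 < LB (42693/40000) (6099/5000) (6099/10000) (6099/8000)"
  unfolding LB_def hh_def d2_def by (simp add: power_divide)

lemma leaf16: "1/50 < LB (42693/40000) (6099/5000) (6099/8000) (18297/20000)"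
  unfolding LB_def hh_def d2_def by (simp add: power_divide)

lemma leaf17: "1/50 < LB (18297/20000) (42693/40000) (18297/20000) (42693/40000)"
  unfolding LB_def hh_def d2_def by (simp add: power_divide)

lemma leaf18: "1/50 < LB (18297/20000) (79287/80000) (42693/40000) (6099/5000)"
  unfolding LB_def hh_def d2_def by (simp add: power_divide)

lemma leaf19: "1/50 < LB (79287/80000) (42693/40000) (42693/40000) (6099/5000)"
  unfolding LB_def hh_def d2_def by (simp add: power_divide)

lemma leaf20: "1/50 < LB (42693/40000) (18297/16000) (18297/20000) (42693/40000)"
  unfolding LB_def hh_def d2_def by (simp add: power_divide)

lemma leaf21: "1/50 < LB (18297/16000) (6099/5000) (18297/20000) (42693/40000)"
  unfolding LB_def hh_def d2_def by (simp add: power_divide)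

lemma leaf22: "1/50 < LB (42693/40000) (18297/16000) (42693/40000) (6099/5000)"
  unfolding LB_def hh_def d2_def by (simp add: power_divide)

lemma leaf23: "1/50 < LB (18297/16000) (189069/160000) (42693/40000) (18297/16000)"
  unfolding LB_def hh_def d2_def by (simp add: power_divide)

lemma leaf24: "1/50 < LB (189069/160000) (6099/5000) (42693/40000) (18297/16000)"
  unfolding LB_def hh_def d2_def by (simp add: power_divide)

lemma leaf25: "1/50 < LB (18297/16000) (189069/160000) (18297/16000) (6099/5000)"
  unfolding LB_def hh_def d2_def by (simp add: power_divide)

lemma leaf26: "1/50 < LB (189069/160000) (384237/320000) (18297/16000) (189069/160000)"
  unfolding LB_def hh_def d2_def by (simp add: power_divide)

lemma leaf27: "1/50 < LB (384237/320000) (6099/5000) (18297/16000) (189069/160000)"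
  unfolding LB_def hh_def d2_def by (simp add: power_divide)

lemma leaf28: "1/50 < LB (189069/160000) (384237/320000) (189069/160000) (6099/5000)"
  unfolding LB_def hh_def d2_def by (simp add: power_divide)

lemma leaf29: "1/50 < LB (384237/320000) (6099/5000) (189069/160000) (384237/320000)"
  unfolding LB_def hh_def d2_def by (simp add: power_divide)

lemma leaf30: "1/50 < LB (384237/320000) (774573/640000) (384237/320000) (6099/5000)"
  unfolding LB_def hh_def d2_def by (simp add: power_divide)

lemma leaf31: "1/50 < LB (774573/640000) (6099/5000) (384237/320000) (6099/5000)"
  unfolding LB_def hh_def d2_def by (simp add: power_divide)
lemma Qall: "Q 0 (6099/5000) 0 (6099/5000)"
apply (rule splitB[of _ "6099/10000"])
apply (rule splitC[of _ _ _ "6099/10000"])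
apply (rule splitB[of _ "6099/20000"])
apply (rule leaf[of "0" "6099/20000" "0" "6099/10000"], simp, simp, simp, rule leaf0)
apply (rule leaf[of "6099/20000" "6099/10000" "0" "6099/10000"], simp, simp, simp, rule leaf1)
apply (rule splitB[of _ "6099/20000"])
apply (rule leaf[of "0" "6099/20000" "6099/10000" "6099/5000"], simp, simp, simp, rule leaf2)
apply (rule leaf[of "6099/20000" "6099/10000" "6099/10000" "6099/5000"], simp, simp, simp, rule leaf3)
apply (rule splitC[of _ _ _ "6099/10000"])
apply (rule splitB[of _ "18297/20000"])
apply (rule splitC[of _ _ _ "6099/20000"])
apply (rule leaf[of "6099/10000" "18297/20000" "0" "6099/20000"], simp, simp, simp, rule leaf4)
apply (rule splitB[of _ "6099/8000"])
apply (rule leaf[of "6099/10000" "6099/8000" "6099/20000" "6099/10000"], simp, simp, simp, rule leaf5)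
apply (rule leaf[of "6099/8000" "18297/20000" "6099/20000" "6099/10000"], simp, simp, simp, rule leaf6)
apply (rule splitC[of _ _ _ "6099/20000"])
apply (rule leaf[of "18297/20000" "6099/5000" "0" "6099/20000"], simp, simp, simp, rule leaf7)
apply (rule splitB[of _ "42693/40000"])
apply (rule leaf[of "18297/20000" "42693/40000" "6099/20000" "6099/10000"], simp, simp, simp, rule leaf8)
apply (rule leaf[of "42693/40000" "6099/5000" "6099/20000" "6099/10000"], simp, simp, simp, rule leaf9)
apply (rule splitB[of _ "18297/20000"])
apply (rule splitC[of _ _ _ "18297/20000"])
apply (rule splitB[of _ "6099/8000"])
apply (rule leaf[of "6099/10000" "6099/8000" "6099/10000" "18297/20000"], simp, simp, simp, rule leaf10)
apply (rule leaf[of "6099/8000" "18297/20000" "6099/10000" "18297/20000"], simp, simp, simp, rule leaf11)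
apply (rule splitB[of _ "6099/8000"])
apply (rule leaf[of "6099/10000" "6099/8000" "18297/20000" "6099/5000"], simp, simp, simp, rule leaf12)
apply (rule leaf[of "6099/8000" "18297/20000" "18297/20000" "6099/5000"], simp, simp, simp, rule leaf13)
apply (rule splitC[of _ _ _ "18297/20000"])
apply (rule splitB[of _ "42693/40000"])
apply (rule leaf[of "18297/20000" "42693/40000" "6099/10000" "18297/20000"], simp, simp, simp, rule leaf14)
apply (rule splitC[of _ _ _ "6099/8000"])
apply (rule leaf[of "42693/40000" "6099/5000" "6099/10000" "6099/8000"], simp, simp, simp, rule leaf15)
apply (rule leaf[of "42693/40000" "6099/5000" "6099/8000" "18297/20000"], simp, simp, simp, rule leaf16)
apply (rule splitB[of _ "42693/40000"])
apply (rule splitC[of _ _ _ "42693/40000"])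
apply (rule leaf[of "18297/20000" "42693/40000" "18297/20000" "42693/40000"], simp, simp, simp, rule leaf17)
apply (rule splitB[of _ "79287/80000"])
apply (rule leaf[of "18297/20000" "79287/80000" "42693/40000" "6099/5000"], simp, simp, simp, rule leaf18)
apply (rule leaf[of "79287/80000" "42693/40000" "42693/40000" "6099/5000"], simp, simp, simp, rule leaf19)
apply (rule splitC[of _ _ _ "42693/40000"])
apply (rule splitB[of _ "18297/16000"])
apply (rule leaf[of "42693/40000" "18297/16000" "18297/20000" "42693/40000"], simp, simp, simp, rule leaf20)
apply (rule leaf[of "18297/16000" "6099/5000" "18297/20000" "42693/40000"], simp, simp, simp, rule leaf21)
apply (rule splitB[of _ "18297/16000"])
apply (rule leaf[of "42693/40000" "18297/16000" "42693/40000" "6099/5000"], simp, simp, simp, rule leaf22)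
apply (rule splitC[of _ _ _ "18297/16000"])
apply (rule splitB[of _ "189069/160000"])
apply (rule leaf[of "18297/16000" "189069/160000" "42693/40000" "18297/16000"], simp, simp, simp, rule leaf23)
apply (rule leaf[of "189069/160000" "6099/5000" "42693/40000" "18297/16000"], simp, simp, simp, rule leaf24)
apply (rule splitB[of _ "189069/160000"])
apply (rule leaf[of "18297/16000" "189069/160000" "18297/16000" "6099/5000"], simp, simp, simp, rule leaf25)
apply (rule splitC[of _ _ _ "189069/160000"])
apply (rule splitB[of _ "384237/320000"])
apply (rule leaf[of "189069/160000" "384237/320000" "18297/16000" "189069/160000"], simp, simp, simp, rule leaf26)
apply (rule leaf[of "384237/320000" "6099/5000" "18297/16000" "189069/160000"], simp, simp, simp, rule leaf27)
apply (rule splitB[of _ "384237/320000"])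
apply (rule leaf[of "189069/160000" "384237/320000" "189069/160000" "6099/5000"], simp, simp, simp, rule leaf28)
apply (rule splitC[of _ _ _ "384237/320000"])
apply (rule leaf[of "384237/320000" "6099/5000" "189069/160000" "384237/320000"], simp, simp, simp, rule leaf29)
apply (rule splitB[of _ "774573/640000"])
apply (rule leaf[of "384237/320000" "774573/640000" "384237/320000" "6099/5000"], simp, simp, simp, rule leaf30)
apply (rule leaf[of "774573/640000" "6099/5000" "384237/320000" "6099/5000"], simp, simp, simp, rule leaf31)
  done

theorem lemmaA2:
  fixes x y z :: real
  assumes "0 < x" "x < Re_root" "0 < y" "y < Re_root" "0 < z" "z < Re_root"
  shows "2 * d0 y z + 7/10 * sqrt y * d1 y z - 51/100 * sqrt (y*z) * d2 y z
         + 10/7 * sqrt x * d1 x y + sqrt (x*y) * d2 x y > 1/50"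
proof -
  have R: "Re_root < (6099/5000)^2" by (rule Re_root_bound)
  have sy: "sqrt y \<le> 6099/5000"
    using real_sqrt_le_mono[of y "(6099/5000)^2"] assms R by simp
  have sz: "sqrt z \<le> 6099/5000"
    using real_sqrt_le_mono[of z "(6099/5000)^2"] assms R by simp
  have "x \<le> (6099/5000)^2" using assms R by simp
  thus ?thesis using Qall sy sz assms unfolding Q_def by auto
qed

end
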